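(* For every prime power $q$, $\mathbb{E}_q(3)=2^{\lfloor\log_2(q^2+q+2)\rfloor}$.
   Context: $\mathbb{P}_q(n)$ denotes the set of all subspaces of $\mathbb{F}_q^n$. For subspaces $X,Y$ the subspace distance is $d_S(X,Y)=\dim X+\dim Y-2\dim(X\cap Y)$. A linear code in $\mathbb{P}_q(n)$ is a subset $\mathcal{U}\subseteq\mathbb{P}_q(n)$ with $\{0\}\in\mathcal{U}$ for which there exists a map $\boxplus:\mathcal{U}\times\mathcal{U}\to\mathcal{U}$ such that (i) $(\mathcal{U},\boxplus)$ is an abelian group; (ii) its identity element is $\{0\}$; (iii) $X\boxplus X=\{0\}$ for all $X\in\mathcal{U}$; (iv) $d_S(Y_1\boxplus X,Y_2\boxplus X)=d_S(Y_1,Y_2)$ for all $Y_1,Y_2,X\in\mathcal{U}$. It is equidistant if there is $r$ with $d_S(X,Y)=r$ for all distinct $X,Y\in\mathcal{U}$. $\mathbb{E}_q(n)$ denotes the maximum size of an equidistant linear code in $\mathbb{P}_q(n)$. *)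

theory Defs
  imports "HOL-Analysis.Cartesian_Space"
begin

text \<open>The projective space P_q(n): all subspaces of F^n, where F is a finite field
  (represented as a type 'a of class field and finite, so q = CARD('a)) and F^n is 'a^'n.\<close>

definition proj_space :: "('a::{field,finite} ^ 'n) set set" where
  "proj_space = {X. vec.subspace X}"

definition subspace_dist :: "('a::{field,finite} ^ 'n) set \<Rightarrow> ('a ^ 'n) set \<Rightarrow> nat" where
  "subspace_dist X Y = nat (int (vec.dim X) + int (vec.dim Y) - 2 * int (vec.dim (X \<inter> Y)))"

definition is_linear_code :: "('a::{field,finite} ^ 'n) set set \<Rightarrow> bool" where
  "is_linear_code U \<longleftrightarrow> U \<subseteq> proj_space \<and> {0} \<in> U \<and>
     (\<exists>plus :: ('a ^ 'n) set \<Rightarrow> ('a ^ 'n) set \<Rightarrow> ('a ^ 'n) set.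
        (\<forall>X\<in>U. \<forall>Y\<in>U. plus X Y \<in> U) \<and>
        (\<forall>X\<in>U. \<forall>Y\<in>U. \<forall>Z\<in>U. plus (plus X Y) Z = plus X (plus Y Z)) \<and>
        (\<forall>X\<in>U. \<forall>Y\<in>U. plus X Y = plus Y X) \<and>
        (\<forall>X\<in>U. plus {0} X = X \<and> plus X {0} = X) \<and>
        (\<forall>X\<in>U. \<exists>Y\<in>U. plus X Y = {0}) \<and>
        (\<forall>X\<in>U. plus X X = {0}) \<and>
        (\<forall>Y1\<in>U. \<forall>Y2\<in>U. \<forall>X\<in>U. subspace_dist (plus Y1 X) (plus Y2 X) = subspace_dist Y1 Y2))"

definition is_equidistant :: "('a::{field,finite} ^ 'n) set set \<Rightarrow> bool" where
  "is_equidistant U \<longleftrightarrow> (\<exists>r. \<forall>X\<in>U. \<forall>Y\<in>U. X \<noteq> Y \<longrightarrow> subspace_dist X Y = r)"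

definition max_equidistant :: "('a::{field,finite} ^ 'n) itself \<Rightarrow> nat" where
  "max_equidistant _ = Max {card U | U :: ('a ^ 'n) set set. is_linear_code U \<and> is_equidistant U}"

end

theory Submission
  imports Defs
begin

definition dotp :: "'a::field ^ 'n \<Rightarrow> 'a ^ 'n \<Rightarrow> 'a" where
  "dotp a x = (\<Sum>i\<in>UNIV. a$i * x$i)"

definition hyp :: "'a::field ^ 'n \<Rightarrow> ('a ^ 'n) set" where
  "hyp a = {x. dotp a x = 0}"

lemma dotp_add: "dotp a (x + y) = dotp a x + dotp a y"
  by (simp add: dotp_def distrib_left sum.distrib)

lemma dotp_scale: "dotp a (c *s x) = c * dotp a x"
  by (simp add: dotp_def sum_distrib_left algebra_simps)

lemma dotp_scale_l: "dotp (c *s a) x = c * dotp a x"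
  by (simp add: dotp_def sum_distrib_left algebra_simps)

lemma dotp_diff: "dotp a (x - y) = dotp a x - dotp a y"
  by (simp add: dotp_def right_diff_distrib sum_subtractf)

lemma dotp_zero[simp]: "dotp a 0 = 0"
  by (simp add: dotp_def)

lemma subspace_hyp: "vec.subspace (hyp a)"
  unfolding vec.subspace_def hyp_def by (auto simp: dotp_add dotp_scale)

lemma hyp_coord:
  fixes a b :: "'a::field ^ 'n"
  assumes "a \<noteq> 0" "hyp a \<subseteq> hyp b"
  shows "\<exists>c. b = c *s a"
proof -
  obtain i where i: "a$i \<noteq> 0" using assms(1) by (metis vec_eq_iff zero_index)
  define c where "c = b$i / a$i"
  have *: "b$j = c * a$j" for j
  proof -
    define x :: "'a ^ 'n" where "x = (\<chi> k. (if k = j then a$i else 0) - (if k = i then a$j else 0))"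
    have "dotp a x = 0"
      by (simp add: x_def dotp_def right_diff_distrib sum_subtractf if_distrib[of "\<lambda>t. _ * t"] sum.delta cong: if_cong)
    hence "x \<in> hyp b" using assms(2) by (auto simp: hyp_def)
    hence "dotp b x = 0" by (simp add: hyp_def)
    hence "b$j * a$i = b$i * a$j"
      by (simp add: x_def dotp_def right_diff_distrib sum_subtractf if_distrib[of "\<lambda>t. _ * t"] sum.delta cong: if_cong)
    thus ?thesis using i by (simp add: field_simps c_def)
  qed
  have "b = c *s a" unfolding vec_eq_iff vector_smult_component using * by blast
  thus ?thesis by blast
qed

lemma hyp_scale: "c \<noteq> 0 \<Longrightarrow> hyp (c *s a) = hyp a"
  by (simp add: hyp_def dotp_scale_l)

lemma dim_hyp:
  fixes a :: "'a::field ^ 'n"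
  assumes "a \<noteq> 0"
  shows "vec.dim (hyp a) = CARD('n) - 1"
proof -
  obtain i where i: "a$i \<noteq> 0" using assms(1) by (metis vec_eq_iff zero_index)
  define e :: "'a ^ 'n" where "e = axis i 1"
  have de: "dotp a x = a$i" if "x = e" for x
    using that by (simp add: e_def dotp_def axis_def if_distrib[of "\<lambda>t. _ * t"] sum.delta cong: if_cong)
  have e0: "e \<noteq> 0" by (simp add: e_def axis_eq_0_iff)
  let ?S = "hyp a" and ?T = "vec.span {e}"
  have sum: "{x + y |x y. x \<in> ?S \<and> y \<in> ?T} = UNIV"
  proof -
    have "z \<in> {x + y |x y. x \<in> ?S \<and> y \<in> ?T}" for z
    proof -
      define c where "c = dotp a z / a$i"
      have "dotp a (z - c *s e) = dotp a z - c * a$i"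
        by (simp add: dotp_diff dotp_scale de)
      also have "c * a$i = dotp a z" using i by (simp add: c_def)
      finally have "z - c *s e \<in> ?S" by (simp add: hyp_def)
      moreover have "c *s e \<in> ?T" by (simp add: vec.span_base vec.span_scale)
      moreover have "z = (z - c *s e) + c *s e" by simp
      ultimately show ?thesis by blast
    qed
    thus ?thesis by blast
  qed
  have int: "?S \<inter> ?T = {0}"
  proof -
    have "y = 0" if yS: "y \<in> ?S" and yT: "y \<in> ?T" for y
    proof -
      obtain c where c: "y = c *s e" using yT by (auto simp: vec.span_singleton)
      have "c * a$i = 0" using yS c by (simp add: hyp_def dotp_scale de)
      thus ?thesis using i c by simp
    qed
    moreover have "0 \<in> ?S \<inter> ?T" by (simp add: hyp_def vec.span_zero)
    ultimately show ?thesis by blast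
  qed
  have dT: "vec.dim ?T = 1"
  proof -
    have "vec.independent {e}" using e0 by (simp add: vec.independent_insert vec.span_empty)
    thus ?thesis by (simp add: vec.dim_span_eq_card_independent)
  qed
  have "vec.dim {x + y |x y. x \<in> ?S \<and> y \<in> ?T} + vec.dim (?S \<inter> ?T) = vec.dim ?S + vec.dim ?T"
    by (rule vec.dim_sums_Int[OF subspace_hyp vec.subspace_span])
  hence "vec.dim (UNIV::('a^'n) set) + vec.dim {0::'a^'n} = vec.dim ?S + 1"
    by (simp only: sum int dT)
  hence "CARD('n) + 0 = vec.dim ?S + 1" unfolding vec_dim_card by simp
  thus ?thesis by simp
qed


lemma count_hyp:
  shows "card (hyp ` (UNIV - {0::'a::{field,finite}^'n})) * (CARD('a) - 1) = CARD('a)^CARD('n) - 1"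
proof -
  let ?N = "UNIV - {0::'a^'n}"
  have fN: "finite ?N" by simp
  have cN: "card ?N = CARD('a)^CARD('n) - 1" by (simp add: card_Diff_singleton)
  have fib: "card {x \<in> ?N. hyp x = y} = CARD('a) - 1" if yN: "y \<in> hyp ` ?N" for y
  proof -
    obtain a where a: "a \<noteq> 0" "y = hyp a" using yN by blast
    have "{x \<in> ?N. hyp x = y} = (\<lambda>c. c *s a) ` (UNIV - {0})"
    proof (intro equalityI subsetI)
      fix x assume "x \<in> {x \<in> ?N. hyp x = y}"
      hence x: "x \<noteq> 0" "hyp x = hyp a" using a by auto
      then obtain c where c: "x = c *s a" using hyp_coord[OF a(1)] by blast
      hence "c \<noteq> 0" using x by auto
      thus "x \<in> (\<lambda>c. c *s a) ` (UNIV - {0})" using c by blast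
    next
      fix x assume "x \<in> (\<lambda>c. c *s a) ` (UNIV - {0})"
      then obtain c where c: "c \<noteq> 0" "x = c *s a" by blast
      thus "x \<in> {x \<in> ?N. hyp x = y}" using a hyp_scale[OF c(1)] by auto
    qed
    moreover have "inj_on (\<lambda>c. c *s a) (UNIV - {0})"
      using a by (auto simp: inj_on_def)
    ultimately show ?thesis by (simp add: card_image card_Diff_singleton)
  qed
  have "card ?N = (\<Sum>x\<in>?N. 1)" by simp
  also have "\<dots> = (\<Sum>y\<in>hyp ` ?N. (\<Sum>x\<in>{x \<in> ?N. hyp x = y}. 1))"
    by (rule sum.image_gen[OF fN])
  also have "\<dots> = (\<Sum>y\<in>hyp ` ?N. CARD('a) - 1)"
    by (intro sum.cong refl) (simp only: card_eq_sum[symmetric] fib)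
  also have "\<dots> = card (hyp ` ?N) * (CARD('a) - 1)" by simp
  finally show ?thesis using cN by simp
qed

definition cross :: "'a::field^3 \<Rightarrow> 'a^3 \<Rightarrow> 'a^3" where
  "cross v u = (\<chi> i. if i = 1 then v$2*u$3 - v$3*u$2 else if i = 2 then v$3*u$1 - v$1*u$3 else v$1*u$2 - v$2*u$1)"

lemma cross_orth1: "dotp (cross v u) v = 0"
  by (simp add: dotp_def sum_3 cross_def algebra_simps)

lemma cross_orth2: "dotp (cross v u) u = 0"
  by (simp add: dotp_def sum_3 cross_def algebra_simps)

lemma cross_zero:
  fixes u v :: "'a::field^3"
  assumes "v \<noteq> 0" "cross v u = 0"
  shows "\<exists>c. u = c *s v"
proof -
  have e1: "v$2*u$3 = v$3*u$2" using arg_cong[OF assms(2), of "\<lambda>w. w$1"] by (simp add: cross_def)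
  have e2: "v$3*u$1 = v$1*u$3" using arg_cong[OF assms(2), of "\<lambda>w. w$2"] by (simp add: cross_def)
  have e3: "v$1*u$2 = v$2*u$1" using arg_cong[OF assms(2), of "\<lambda>w. w$3"] by (simp add: cross_def)
  obtain k where k: "v$k \<noteq> 0" using assms(1) by (metis vec_eq_iff zero_index)
  define c where "c = u$k / v$k"
  have "u$j = c * v$j" for j
    using exhaust_3[of k] exhaust_3[of j] k e1 e2 e3
    by (auto simp: c_def field_simps)
  hence "u = c *s v" unfolding vec_eq_iff vector_smult_component by blast
  thus ?thesis by blast
qed


definition lines :: "('a::{field,finite}^3) set set" where
  "lines = {L. vec.subspace L \<and> vec.dim L = 2}"

lemma lines_eq: "(lines :: ('a::{field,finite}^3) set set) = hyp ` (UNIV - {0})"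
proof (intro equalityI subsetI)
  fix L :: "('a^3) set" assume "L \<in> hyp ` (UNIV - {0})"
  then obtain a where a: "a \<noteq> 0" "L = hyp a" by blast
  thus "L \<in> lines" using subspace_hyp[of a] dim_hyp[OF a(1)] by (simp add: lines_def)
next
  fix L :: "('a^3) set" assume "L \<in> lines"
  hence L: "vec.subspace L" "vec.dim L = 2" by (auto simp: lines_def)
  obtain B where B: "B \<subseteq> L" "vec.independent B" "L \<subseteq> vec.span B" "card B = vec.dim L"
    using vec.basis_exists[of L] by blast
  then obtain u v where uv: "B = {u, v}" "u \<noteq> v" using L(2) by (auto simp: card_2_iff)
  have "vec.independent (insert u {v})" using B(2) uv by simp
  hence "vec.independent {v}" "u \<notin> vec.span {v}" using uv(2) by (auto simp: vec.independent_insert)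
  hence v0: "v \<noteq> 0" and nu: "\<And>c. u \<noteq> c *s v"
    by (auto simp: vec.span_singleton vec.dependent_zero)
  define a where "a = cross v u"
  have a0: "a \<noteq> 0" unfolding a_def using cross_zero[OF v0, of u] nu by blast
  have "{u, v} \<subseteq> hyp a" by (simp add: hyp_def a_def cross_orth1 cross_orth2)
  hence "vec.span B \<subseteq> hyp a" using uv(1) vec.span_minimal subspace_hyp by blast
  hence sub: "L \<subseteq> hyp a" using B(3) by blast
  have "vec.dim (hyp a) = 2" using dim_hyp[OF a0] by simp
  hence "L = hyp a" using vec.subspace_dim_equal[OF L(1) subspace_hyp sub] L(2) by simp
  thus "L \<in> hyp ` (UNIV - {0})" using a0 by blast
qed

lemma card_ge2: "CARD('a::{field,finite}) \<ge> 2"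
proof -
  have "card {0::'a, 1} \<le> CARD('a)" by (rule card_mono) auto
  thus ?thesis by simp
qed

lemma card_lines: "card (lines :: ('a::{field,finite}^3) set set) = CARD('a)^2 + CARD('a) + 1"
proof -
  let ?q = "CARD('a)"
  define p where "p = ?q - 1"
  have "card (lines :: ('a^3) set set) * (?q - 1) = ?q^3 - 1"
    using count_hyp[where 'a='a and 'n=3] by (simp add: lines_eq)
  moreover have p: "?q = p + 1" "p \<noteq> 0" using card_ge2[where 'a='a] by (simp_all add: p_def)
  moreover have "(p+1)^3 - 1 = ((p+1)^2 + (p+1) + 1) * p"
    by (simp add: power3_eq_cube power2_eq_square algebra_simps)
  ultimately have "card (lines :: ('a^3) set set) * p = ((p+1)^2 + (p+1) + 1) * p"
    by (simp only:) simp
  hence "card (lines :: ('a^3) set set) = (p+1)^2 + (p+1) + 1" by (metis mult_right_cancel p(2))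
  thus ?thesis using p(1) by simp
qed

lemma line_inter:
  fixes L1 L2 :: "('a::{field,finite}^3) set"
  assumes "L1 \<in> lines" "L2 \<in> lines" "L1 \<noteq> L2"
  shows "vec.dim (L1 \<inter> L2) = 1"
proof -
  have s: "vec.subspace L1" "vec.subspace L2" "vec.dim L1 = 2" "vec.dim L2 = 2"
    using assms by (auto simp: lines_def)
  have "vec.dim {x + y |x y. x \<in> L1 \<and> y \<in> L2} + vec.dim (L1 \<inter> L2) = vec.dim L1 + vec.dim L2"
    by (rule vec.dim_sums_Int[OF s(1,2)])
  moreover have "vec.dim {x + y |x y. x \<in> L1 \<and> y \<in> L2} \<le> 3"
    using dim_subset_UNIV_cart_gen[of "{x + y |x y. x \<in> L1 \<and> y \<in> L2}"] by simp
  moreover have "vec.dim (L1 \<inter> L2) \<noteq> 2"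
  proof
    assume d: "vec.dim (L1 \<inter> L2) = 2"
    have "L1 \<inter> L2 = L1" using vec.subspace_dim_equal[OF vec.subspace_inter[OF s(1,2)] s(1)] d s by simp
    moreover have "L1 \<inter> L2 = L2" using vec.subspace_dim_equal[OF vec.subspace_inter[OF s(1,2)] s(2)] d s by simp
    ultimately show False using assms(3) by simp
  qed
  moreover have "vec.dim (L1 \<inter> L2) \<le> 2" using vec.dim_subset[of "L1 \<inter> L2" L1] s by simp
  ultimately show ?thesis using s by linarith
qed

lemma zero_notin_lines: "{0} \<notin> lines"
  by (simp add: lines_def)

lemma dist_self: "subspace_dist X X = 0"
  by (simp add: subspace_dist_def)

lemma dist_zero_l: "vec.subspace X \<Longrightarrow> subspace_dist {0} X = vec.dim X"
proof -
  assume "vec.subspace X"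
  hence "{0} \<inter> X = {0}" using vec.subspace_0 by blast
  thus ?thesis by (simp add: subspace_dist_def)
qed

lemma dist_zero_r: "vec.subspace X \<Longrightarrow> subspace_dist X {0} = vec.dim X"
proof -
  assume "vec.subspace X"
  hence "X \<inter> {0} = {0}" using vec.subspace_0 by blast
  thus ?thesis by (simp add: subspace_dist_def)
qed

lemma dist_U:
  fixes L :: "('a::{field,finite}^3) set set"
  assumes "L \<subseteq> lines" "A \<in> insert {0} L" "B \<in> insert {0} L"
  shows "subspace_dist A B = (if A = B then 0 else 2)"
proof (cases "A = B")
  case True thus ?thesis by (simp add: dist_self)
next
  case False
  show ?thesis
  proof (cases "A = {0}")
    case True
    hence "B \<in> lines" using False assms by auto
    thus ?thesis using True False dist_zero_l[of B] by (simp add: lines_def)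
  next
    case A: False
    hence Al: "A \<in> lines" using assms by auto
    show ?thesis
    proof (cases "B = {0}")
      case True thus ?thesis using Al False dist_zero_r[of A] by (simp add: lines_def)
    next
      case B: False
      hence "B \<in> lines" using assms by auto
      thus ?thesis using Al False line_inter[OF Al _ False]
        by (simp add: lines_def subspace_dist_def)
    qed
  qed
qed


lemma pow2_card:
  fixes U :: "'b set" and p :: "'b \<Rightarrow> 'b \<Rightarrow> 'b"
  assumes fin: "finite U" and z: "z \<in> U"
  and cl: "\<forall>X\<in>U. \<forall>Y\<in>U. p X Y \<in> U"
  and as: "\<forall>X\<in>U. \<forall>Y\<in>U. \<forall>Z\<in>U. p (p X Y) Z = p X (p Y Z)"
  and co: "\<forall>X\<in>U. \<forall>Y\<in>U. p X Y = p Y X"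
  and idl: "\<forall>X\<in>U. p z X = X"
  and inv: "\<forall>X\<in>U. p X X = z"
  shows "\<exists>m. card U = 2^m"
proof -
  have cl': "\<And>X Y. X \<in> U \<Longrightarrow> Y \<in> U \<Longrightarrow> p X Y \<in> U" using cl by blast
  have as': "\<And>X Y Z. X \<in> U \<Longrightarrow> Y \<in> U \<Longrightarrow> Z \<in> U \<Longrightarrow> p (p X Y) Z = p X (p Y Z)" using as by blast
  have co': "\<And>X Y. X \<in> U \<Longrightarrow> Y \<in> U \<Longrightarrow> p X Y = p Y X" using co by blast
  have idl': "\<And>X. X \<in> U \<Longrightarrow> p z X = X" using idl by blast
  have inv': "\<And>X. X \<in> U \<Longrightarrow> p X X = z" using inv by blast
  have main: "H \<subseteq> U \<Longrightarrow> z \<in> H \<Longrightarrow> (\<forall>X\<in>H. \<forall>Y\<in>H. p X Y \<in> H)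
     \<Longrightarrow> (\<exists>m. card U = 2^m * card H)" for H
  proof (induction "card U - card H" arbitrary: H rule: less_induct)
    case less
    show ?case
    proof -
      note HU = less.prems(1) and zH = less.prems(2) and clH = less.prems(3)
      have clH': "\<And>X Y. X \<in> H \<Longrightarrow> Y \<in> H \<Longrightarrow> p X Y \<in> H" using clH by blast
      show "\<exists>m. card U = 2^m * card H"
      proof (cases "H = U")
        case True thus ?thesis by (intro exI[of _ 0]) simp
      next
        case False
        then obtain a where a: "a \<in> U" "a \<notin> H" using HU by blast
        have inU: "x \<in> U" if "x \<in> H" for x using that HU by blast
        have pa: "p a (p a h) = h" if hH: "h \<in> H" for h
        proof -
          have "p a (p a h) = p (p a a) h" using as'[OF a(1) a(1) inU[OF hH]] by simp
          also have "\<dots> = h" using inv'[OF a(1)] idl'[OF inU[OF hH]] by simp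
          finally show ?thesis .
        qed
        have comm1: "p X (p a h) = p a (p X h)" if "X \<in> U" "h \<in> U" for X h
        proof -
          have "p X (p a h) = p (p X a) h" using as'[OF that(1) a(1) that(2)] by simp
          also have "\<dots> = p (p a X) h" using co'[OF that(1) a(1)] by simp
          also have "\<dots> = p a (p X h)" using as'[OF a(1) that(1) that(2)] by simp
          finally show ?thesis .
        qed
        let ?H' = "H \<union> p a ` H"
        have fH: "finite H" using HU fin finite_subset by blast
        have disj: "H \<inter> p a ` H = {}"
        proof (rule ccontr)
          assume "H \<inter> p a ` H \<noteq> {}"
          then obtain h where h: "h \<in> H" "p a h \<in> H" by blast
          have "p (p a h) h = p a (p h h)" using as'[OF a(1) inU[OF h(1)] inU[OF h(1)]] .
          also have "\<dots> = a" using inv'[OF inU[OF h(1)]] co'[OF a(1) z] idl'[OF a(1)] by simp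
          finally have "p (p a h) h = a" .
          moreover have "p (p a h) h \<in> H" using clH' h by blast
          ultimately show False using a(2) by simp
        qed
        have inj: "inj_on (p a) H"
        proof (rule inj_onI)
          fix x y assume xy: "x \<in> H" "y \<in> H" "p a x = p a y"
          have "x = p a (p a x)" using pa[OF xy(1)] by (rule sym)
          also have "\<dots> = p a (p a y)" using xy(3) by (rule arg_cong)
          also have "\<dots> = y" using pa[OF xy(2)] .
          finally show "x = y" .
        qed
        have cH': "card ?H' = 2 * card H"
        proof -
          have "card ?H' = card H + card (p a ` H)" by (rule card_Un_disjoint[OF fH finite_imageI[OF fH] disj])
          also have "card (p a ` H) = card H" by (rule card_image[OF inj])
          finally show ?thesis by simp
        qed
        have "p a ` H \<subseteq> U" using inU cl'[OF a(1)] by blast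
        hence H'U: "?H' \<subseteq> U" using HU by blast
        have zH': "z \<in> ?H'" using zH by blast
        have clH2: "\<forall>X\<in>?H'. \<forall>Y\<in>?H'. p X Y \<in> ?H'"
        proof (intro ballI)
          fix X Y assume X: "X \<in> ?H'" and Y: "Y \<in> ?H'"
          show "p X Y \<in> ?H'"
          proof (cases "X \<in> H")
            case XH: True
            show ?thesis
            proof (cases "Y \<in> H")
              case True thus ?thesis using XH clH' by blast
            next
              case False
              then obtain h where h: "h \<in> H" "Y = p a h" using Y by blast
              have eq: "p X Y = p a (p X h)"
                using h(2) comm1[OF inU[OF XH] inU[OF h(1)]] by simp
              have "p X h \<in> H" using clH' XH h(1) .
              thus ?thesis unfolding eq by (intro UnI2 imageI)
            qed
          next
            case XnH: False
            then obtain h where h: "h \<in> H" "X = p a h" using X by blast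
            show ?thesis
            proof (cases "Y \<in> H")
              case True
              have eq: "p X Y = p a (p h Y)"
                using h(2) as'[OF a(1) inU[OF h(1)] inU[OF True]] by simp
              have "p h Y \<in> H" using clH' h(1) True .
              thus ?thesis unfolding eq by (intro UnI2 imageI)
            next
              case False
              then obtain g where g: "g \<in> H" "Y = p a g" using Y by blast
              have hU: "h \<in> U" and gU: "g \<in> U" using inU h(1) g(1) by auto
              have "p X Y = p a (p h (p a g))"
                using h(2) g(2) as'[OF a(1) hU cl'[OF a(1) gU]] by simp
              also have "p h (p a g) = p a (p h g)"
                using comm1[OF hU gU] .
              also have "p a (p a (p h g)) = p h g" using pa[OF clH'[OF h(1) g(1)]] .
              finally have eq: "p X Y = p h g" .
              have "p h g \<in> H" using clH' h(1) g(1) .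
              thus ?thesis unfolding eq by (rule UnI1)
            qed
          qed
        qed
        have "card H > 0" using zH fH by (auto simp: card_gt_0_iff)
        moreover have "card ?H' \<le> card U" using H'U fin card_mono by blast
        ultimately have "card U - card ?H' < card U - card H" using cH' by linarith
        then obtain m where "card U = 2^m * card ?H'"
          using less.hyps[OF _ H'U zH' clH2] by blast
        hence "card U = 2^(Suc m) * card H" using cH' by simp
        thus ?thesis by blast
      qed
    qed
  qed
  have "\<forall>X\<in>{z}. \<forall>Y\<in>{z}. p X Y \<in> {z}" using idl'[OF z] by simp
  hence "\<exists>m. card U = 2^m * card {z}"
    using main[of "{z}"] z by blast
  thus ?thesis by simp
qed


lemma construct:
  fixes L :: "('a::{field,finite}^3) set set"
  assumes Ll: "L \<subseteq> lines" and cL: "card L = 2^k - 1"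
  shows "is_linear_code (insert {0} L) \<and> is_equidistant (insert {0} L) \<and> card (insert {0} L) = 2^k"
proof -
  let ?U = "insert {0} L"
  have z: "{0} \<notin> L" using Ll zero_notin_lines by blast
  have fL: "finite L" by simp
  have "(1::nat) \<le> 2^k" by simp
  hence cU: "card ?U = 2^k" using z fL cL by simp
  define P :: "nat set set" where "P = Pow {..<k}"
  have eP: "{} \<in> P" by (simp add: P_def)
  have fP: "finite (P - {{}})" by (simp add: P_def)
  have cP: "card (P - {{}}) = 2^k - 1" using eP by (simp add: P_def card_Pow card_Diff_singleton)
  obtain h where h: "bij_betw h (P - {{}}) L"
    using finite_same_card_bij[OF fP fL] cP cL by auto
  define g where "g A = (if A = {} then {0} else h A)" for A
  have hL: "A \<in> P \<Longrightarrow> A \<noteq> {} \<Longrightarrow> h A \<in> L" for A using h by (auto simp: bij_betw_def)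
  have gb: "bij_betw g P ?U"
    unfolding bij_betw_def
  proof
    show "inj_on g P"
    proof (rule inj_onI)
      fix A B assume AB: "A \<in> P" "B \<in> P" "g A = g B"
      show "A = B"
      proof (cases "A = {}"; cases "B = {}")
        assume "A = {}" "B = {}" thus ?thesis by simp
      next
        assume "A = {}" "B \<noteq> {}" thus ?thesis using AB hL[of B] z by (simp add: g_def)
      next
        assume "A \<noteq> {}" "B = {}" thus ?thesis using AB hL[of A] z by (simp add: g_def)
      next
        assume "A \<noteq> {}" "B \<noteq> {}"
        thus ?thesis using AB h by (simp add: g_def bij_betw_def inj_on_def)
      qed
    qed
    have "g ` P = g ` ({{}} \<union> (P - {{}}))" using eP by (metis insert_Diff insert_is_Un)
    also have "\<dots> = g ` {{}} \<union> g ` (P - {{}})" by (rule image_Un)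
    also have "g ` (P - {{}}) = h ` (P - {{}})" by (rule image_cong) (simp_all add: g_def)
    also have "g ` {{}} = {{0}}" by (simp add: g_def)
    also have "{{0}} \<union> h ` (P - {{}}) = insert {0} (h ` (P - {{}}))" by simp
    also have "h ` (P - {{}}) = L" using h by (simp add: bij_betw_def)
    finally show "g ` P = ?U" .
  qed
  define f where "f = inv_into P g"
  have fP: "X \<in> ?U \<Longrightarrow> f X \<in> P" for X
    unfolding f_def using bij_betw_apply[OF bij_betw_inv_into[OF gb]] by blast
  have gf: "X \<in> ?U \<Longrightarrow> g (f X) = X" for X
    unfolding f_def using bij_betw_inv_into_right[OF gb] by blast
  have fg: "A \<in> P \<Longrightarrow> f (g A) = A" for A
    unfolding f_def using bij_betw_inv_into_left[OF gb] by blast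
  have gP: "A \<in> P \<Longrightarrow> g A \<in> ?U" for A using bij_betw_apply[OF gb] by blast
  have f0: "f {0} = {}" using fg[OF eP] by (simp add: g_def)
  define sd where "sd A B = (A - B) \<union> (B - A)" for A B :: "nat set"
  have sdP: "A \<in> P \<Longrightarrow> B \<in> P \<Longrightarrow> sd A B \<in> P" for A B by (auto simp: P_def sd_def)
  have sd_assoc: "sd (sd A B) C = sd A (sd B C)" for A B C by (auto simp: sd_def)
  have sd_comm: "sd A B = sd B A" for A B by (auto simp: sd_def)
  have sd_0: "sd {} A = A" "sd A {} = A" for A by (auto simp: sd_def)
  have sd_self: "sd A A = {}" for A by (auto simp: sd_def)
  have sd_cancel: "sd A C = sd B C \<Longrightarrow> A = B" for A B C by (auto simp: sd_def)
  define pl where "pl X Y = g (sd (f X) (f Y))" for X Y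
  have p_cl: "\<forall>X\<in>?U. \<forall>Y\<in>?U. pl X Y \<in> ?U"
    unfolding pl_def using gP sdP fP by blast
  have p_as: "\<forall>X\<in>?U. \<forall>Y\<in>?U. \<forall>Z\<in>?U. pl (pl X Y) Z = pl X (pl Y Z)"
  proof (intro ballI)
    fix X Y Z assume XYZ: "X \<in> ?U" "Y \<in> ?U" "Z \<in> ?U"
    have "pl (pl X Y) Z = g (sd (sd (f X) (f Y)) (f Z))"
      unfolding pl_def by (simp only: fg[OF sdP[OF fP[OF XYZ(1)] fP[OF XYZ(2)]]])
    also have "\<dots> = g (sd (f X) (sd (f Y) (f Z)))" by (simp only: sd_assoc)
    also have "\<dots> = pl X (pl Y Z)"
      unfolding pl_def by (simp only: fg[OF sdP[OF fP[OF XYZ(2)] fP[OF XYZ(3)]]])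
    finally show "pl (pl X Y) Z = pl X (pl Y Z)" .
  qed
  have p_co: "\<forall>X\<in>?U. \<forall>Y\<in>?U. pl X Y = pl Y X"
    unfolding pl_def using sd_comm by simp
  have p_id: "\<forall>X\<in>?U. pl {0} X = X \<and> pl X {0} = X"
    unfolding pl_def using f0 sd_0 gf by simp
  have p_self: "\<forall>X\<in>?U. pl X X = {0}"
    unfolding pl_def using sd_self by (simp add: g_def)
  have p_inv: "\<forall>X\<in>?U. \<exists>Y\<in>?U. pl X Y = {0}" using p_self by blast
  have p_eq: "pl Y1 X = pl Y2 X \<longleftrightarrow> Y1 = Y2" if "Y1 \<in> ?U" "Y2 \<in> ?U" "X \<in> ?U" for Y1 Y2 X
  proof
    assume "pl Y1 X = pl Y2 X"
    hence "f (pl Y1 X) = f (pl Y2 X)" by simp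
    hence "sd (f Y1) (f X) = sd (f Y2) (f X)"
      unfolding pl_def by (simp only: fg[OF sdP[OF fP[OF that(1)] fP[OF that(3)]]] fg[OF sdP[OF fP[OF that(2)] fP[OF that(3)]]])
    hence "f Y1 = f Y2" by (rule sd_cancel)
    have "Y1 = g (f Y1)" using gf[OF that(1)] by (rule sym)
    also have "\<dots> = g (f Y2)" using \<open>f Y1 = f Y2\<close> by (rule arg_cong)
    also have "\<dots> = Y2" using gf[OF that(2)] .
    finally show "Y1 = Y2" .
  qed simp
  have p_iso: "\<forall>Y1\<in>?U. \<forall>Y2\<in>?U. \<forall>X\<in>?U. subspace_dist (pl Y1 X) (pl Y2 X) = subspace_dist Y1 Y2"
  proof (intro ballI)
    fix Y1 Y2 X assume Y: "Y1 \<in> ?U" "Y2 \<in> ?U" "X \<in> ?U"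
    have "subspace_dist (pl Y1 X) (pl Y2 X) = (if pl Y1 X = pl Y2 X then 0 else 2)"
    proof -
      have "pl Y1 X \<in> ?U" "pl Y2 X \<in> ?U" using p_cl Y by blast+
      thus ?thesis by (rule dist_U[OF Ll])
    qed
    also have "\<dots> = (if Y1 = Y2 then 0 else 2)" using p_eq[OF Y] by simp
    also have "\<dots> = subspace_dist Y1 Y2" using dist_U[OF Ll Y(1,2)] by simp
    finally show "subspace_dist (pl Y1 X) (pl Y2 X) = subspace_dist Y1 Y2" .
  qed
  have sub: "?U \<subseteq> proj_space"
    using Ll by (auto simp: proj_space_def lines_def)
  have "is_linear_code ?U"
    unfolding is_linear_code_def
    by (intro conjI exI[of _ pl] sub insertI1 p_cl p_as p_co p_id p_inv p_self p_iso)
  moreover have "is_equidistant ?U"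
    unfolding is_equidistant_def using dist_U[OF Ll] by (intro exI[of _ 2]) auto
  ultimately show ?thesis using cU by blast
qed


lemma upper_pow2:
  fixes U :: "('a::{field,finite}^3) set set"
  assumes "is_linear_code U"
  shows "\<exists>m. card U = 2^m"
proof -
  have lc: "U \<subseteq> proj_space \<and> {0} \<in> U \<and>
     (\<exists>pl :: ('a ^ 3) set \<Rightarrow> ('a ^ 3) set \<Rightarrow> ('a ^ 3) set.
        (\<forall>X\<in>U. \<forall>Y\<in>U. pl X Y \<in> U) \<and>
        (\<forall>X\<in>U. \<forall>Y\<in>U. \<forall>Z\<in>U. pl (pl X Y) Z = pl X (pl Y Z)) \<and>
        (\<forall>X\<in>U. \<forall>Y\<in>U. pl X Y = pl Y X) \<and>
        (\<forall>X\<in>U. pl {0} X = X \<and> pl X {0} = X) \<and>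
        (\<forall>X\<in>U. \<exists>Y\<in>U. pl X Y = {0}) \<and>
        (\<forall>X\<in>U. pl X X = {0}) \<and>
        (\<forall>Y1\<in>U. \<forall>Y2\<in>U. \<forall>X\<in>U. subspace_dist (pl Y1 X) (pl Y2 X) = subspace_dist Y1 Y2))"
    using assms by (simp only: is_linear_code_def)
  note z = lc[THEN conjunct2, THEN conjunct1]
  obtain pl where P: "(\<forall>X\<in>U. \<forall>Y\<in>U. pl X Y \<in> U) \<and>
        (\<forall>X\<in>U. \<forall>Y\<in>U. \<forall>Z\<in>U. pl (pl X Y) Z = pl X (pl Y Z)) \<and>
        (\<forall>X\<in>U. \<forall>Y\<in>U. pl X Y = pl Y X) \<and>
        (\<forall>X\<in>U. pl {0} X = X \<and> pl X {0} = X) \<and>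
        (\<forall>X\<in>U. \<exists>Y\<in>U. pl X Y = {0}) \<and>
        (\<forall>X\<in>U. pl X X = {0}) \<and>
        (\<forall>Y1\<in>U. \<forall>Y2\<in>U. \<forall>X\<in>U. subspace_dist (pl Y1 X) (pl Y2 X) = subspace_dist Y1 Y2)"
    using lc[THEN conjunct2, THEN conjunct2] by (rule exE)
  note cl = P[THEN conjunct1]
  note as = P[THEN conjunct2, THEN conjunct1]
  note co = P[THEN conjunct2, THEN conjunct2, THEN conjunct1]
  note idl = P[THEN conjunct2, THEN conjunct2, THEN conjunct2, THEN conjunct1]
  note inv = P[THEN conjunct2, THEN conjunct2, THEN conjunct2, THEN conjunct2, THEN conjunct2, THEN conjunct1]
  have idl': "\<forall>X\<in>U. pl {0} X = X" using idl by blast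
  show ?thesis by (rule pow2_card[OF _ z cl as co idl' inv]) simp
qed

lemma upper_card:
  fixes U :: "('a::{field,finite}^3) set set"
  assumes lc: "is_linear_code U" and eq: "is_equidistant U"
  shows "card U \<le> CARD('a)^2 + CARD('a) + 2"
proof (cases "card U \<le> 2")
  case True thus ?thesis by simp
next
  case False
  have lc': "U \<subseteq> proj_space \<and> {0} \<in> U" using lc[unfolded is_linear_code_def] by (elim conjE) (intro conjI)
  have z: "{0} \<in> U" using lc' by (rule conjunct2)
  have sub: "vec.subspace X" if "X \<in> U" for X using lc' that unfolding proj_space_def by blast
  obtain r where r0: "\<forall>X\<in>U. \<forall>Y\<in>U. X \<noteq> Y \<longrightarrow> subspace_dist X Y = r"
    using eq unfolding is_equidistant_def by (rule exE)
  note r = r0[rule_format]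
  have "X \<in> lines" if X: "X \<in> U" "X \<noteq> {0}" for X
  proof -
    have "\<exists>Y\<in>U. Y \<noteq> X \<and> Y \<noteq> {0}"
    proof (rule ccontr)
      assume "\<not> ?thesis"
      hence "U \<subseteq> {X, {0}}" by blast
      hence "card U \<le> card {X, {0::'a^3}}" by (intro card_mono) simp_all
      also have "\<dots> \<le> 2" by (simp add: card_insert_if)
      finally show False using False by simp
    qed
    then obtain Y where Y: "Y \<in> U" "Y \<noteq> X" "Y \<noteq> {0}" by blast
    have dX: "vec.dim X = r" using r[OF z X(1)] X(2) dist_zero_l[OF sub[OF X(1)]] by simp
    have dY: "vec.dim Y = r" using r[OF z Y(1)] Y(3) dist_zero_l[OF sub[OF Y(1)]] by simp
    have dXY: "subspace_dist X Y = r" using r[OF X(1) Y(1)] Y(2) by simp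
    have c: "vec.dim (X \<inter> Y) \<le> vec.dim X" by (rule vec.dim_subset) blast
    have r1: "vec.dim X \<noteq> 0"
    proof
      assume "vec.dim X = 0"
      hence "X \<subseteq> {0}" by simp
      thus False using X(2) vec.subspace_0[OF sub[OF X(1)]] by blast
    qed
    have r3: "vec.dim X \<le> 3" using dim_subset_UNIV_cart_gen[of X] by simp
    define k where "k = vec.dim (X \<inter> Y)"
    have ne: "nat (int r + int r - 2 * int k) = r"
      using dXY dX dY by (simp add: subspace_dist_def k_def)
    have "int r + int r - 2 * int k \<ge> 0" using c dX k_def by linarith
    hence "int r + int r - 2 * int k = int r" using ne by (metis int_nat_eq)
    hence "r = 2 * k" by linarith
    hence "vec.dim X = 2" using r1 r3 dX by presburger
    thus ?thesis using sub[OF X(1)] by (simp add: lines_def)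
  qed
  hence "U \<subseteq> insert {0} lines" by blast
  hence "card U \<le> card (insert {0} (lines :: ('a^3) set set))" by (intro card_mono) simp_all
  also have "\<dots> \<le> Suc (card (lines :: ('a^3) set set))" by (simp add: card_insert_if)
  finally show ?thesis by (simp add: card_lines)
qed

theorem proposition3:
  shows "max_equidistant TYPE('a::{field,finite} ^ 3) =
           2 ^ nat \<lfloor>log 2 (real (CARD('a) ^ 2 + CARD('a) + 2))\<rfloor>"
proof -
  let ?N = "CARD('a) ^ 2 + CARD('a) + 2"
  obtain n where n: "2^n \<le> ?N" "?N < 2^(n+1)"
    using ex_power_ivl1[of 2 ?N] by auto
  have "\<lfloor>log (real 2) (real ?N)\<rfloor> = int n" by (rule floor_log_nat_eq_if[OF n]) simp
  hence fl: "nat \<lfloor>log 2 (real ?N)\<rfloor> = n" by simp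
  let ?S = "{card U | U :: ('a^3) set set. is_linear_code U \<and> is_equidistant U}"
  have fin: "finite ?S"
  proof (rule finite_subset)
    show "?S \<subseteq> card ` (UNIV :: ('a^3) set set set)" by blast
  qed simp
  have ub: "y \<le> 2^n" if yS: "y \<in> ?S" for y
  proof -
    obtain U :: "('a^3) set set" where U: "y = card U" "is_linear_code U" "is_equidistant U"
      using yS by blast
    obtain m where m: "card U = 2^m" using upper_pow2[OF U(2)] by blast
    have "(2::nat)^m < 2^(n+1)" using upper_card[OF U(2,3)] m n(2) by simp
    hence "m < n + 1" using power_less_imp_less_exp[of "2::nat" m "n+1"] by simp
    hence "(2::nat)^m \<le> 2^n" by (intro power_increasing) simp_all
    thus ?thesis using U(1) m by simp
  qed
  have "2^n - 1 \<le> card (lines :: ('a^3) set set)" using n(1) card_lines[where 'a='a] by simp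
  then obtain L :: "('a^3) set set" where L: "L \<subseteq> lines" "card L = 2^n - 1"
    by (metis obtain_subset_with_card_n)
  have mem: "2^n \<in> ?S"
  proof -
    have c: "is_linear_code (insert {0} L) \<and> is_equidistant (insert {0} L) \<and> card (insert {0} L) = 2^n"
      by (rule construct[OF L])
    show ?thesis by (rule CollectI, rule exI[of _ "insert {0} L"]) (use c in simp)
  qed
  have "max_equidistant TYPE('a ^ 3) = Max ?S" by (simp add: max_equidistant_def)
  also have "\<dots> = 2^n" by (rule Max_eqI[OF fin ub mem])
  finally show ?thesis using fl by simp
qed

end
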